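(* Let $d>0$ be square-free and $A=\begin{pmatrix}a&B\\ \bar B&c\end{pmatrix}$ with $a,c\in\mathbb{Z}$, $B\in\mathcal{O}_d$, $D=|B|^2-ac>0$. If $A$ corresponds to an embedded totally geodesic surface in $\Omega_d$, then $$4D\le \min_{x,y\in\mathcal{O}_d:\ Q_A(x,y)\neq0} Q_A(x,y)^2,$$ where $Q_A(x,y)=\begin{pmatrix}x&y\end{pmatrix}A\begin{pmatrix}\bar x\\ \bar y\end{pmatrix}$.
   Context: $\mathcal{O}_d$ is the ring of integers of $\mathbb{Q}(\sqrt{-d})$, $\Gamma_d=\mathrm{PSL}(2,\mathcal{O}_d)$, $\Omega_d=\mathbb{H}^3/\Gamma_d$. The surface corresponding to $A$ is the image in $\Omega_d$ of the hyperbolic plane $H$ bounded by the circle/line $\{z: Q_A(z,1)=0\}$; it is embedded if for all $\gamma\in\Gamma_d$, $\gamma H=H$ or $\gamma H\cap H=\emptyset$. *)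

theory Defs
  imports "HOL-Analysis.Analysis" "HOL-Computational_Algebra.Computational_Algebra"
begin

definition Od :: "nat \<Rightarrow> complex set" where
  "Od d = {z. algebraic_int z \<and>
     (\<exists>p q :: rat. z = of_rat p + of_rat q * (complex_of_real (sqrt (real d)) * \<i>))}"

text \<open>Gamma_d = PSL(2,O_d). A matrix [[al,be],[ga,de]] is stored as a 4-tuple;
  since +M and -M act identically, quantifying over SL(2,O_d) is the same as over PSL(2,O_d).\<close>
definition SL2Od :: "nat \<Rightarrow> (complex \<times> complex \<times> complex \<times> complex) set" where
  "SL2Od d = {(al, be, ga, de). al \<in> Od d \<and> be \<in> Od d \<and> ga \<in> Od d \<and> de \<in> Od d
                               \<and> al * de - be * ga = 1}"

definition H3 :: "(complex \<times> real) set" where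
  "H3 = {(z, t). t > 0}"

text \<open>Poincare extension of the Moebius transformation of [[al,be],[ga,de]] (det 1)
  to the upper half-space (Elstrodt-Grunewald-Mennicke formula).\<close>
definition moeb_act :: "complex \<times> complex \<times> complex \<times> complex \<Rightarrow> complex \<times> real \<Rightarrow> complex \<times> real" where
  "moeb_act M P = (case M of (al, be, ga, de) \<Rightarrow> case P of (z, t) \<Rightarrow>
     (let N = (cmod (ga * z + de))\<^sup>2 + (cmod ga)\<^sup>2 * t\<^sup>2 in
       (((al * z + be) * cnj (ga * z + de) + al * cnj ga * complex_of_real (t\<^sup>2)) / complex_of_real N,
        t / N)))"

text \<open>Hermitian form Q_A(x,y) = (x y) A (conj x, conj y)^T for A = [[a,B],[conj B,c]].
  It is real-valued; we record its value as a real number.\<close>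
definition QA :: "int \<Rightarrow> complex \<Rightarrow> int \<Rightarrow> complex \<Rightarrow> complex \<Rightarrow> real" where
  "QA a B c x y = Re ((x * of_int a + y * cnj B) * cnj x + (x * B + y * of_int c) * cnj y)"

text \<open>The hyperbolic plane in H^3 bounded by the circle/line {z. Q_A(z,1) = 0}:
  the hemisphere / vertical half-plane a(|z|^2+t^2) + 2 Re(B z) + c = 0, t > 0.\<close>
definition plane_of :: "int \<Rightarrow> complex \<Rightarrow> int \<Rightarrow> (complex \<times> real) set" where
  "plane_of a B c = {(z, t). t > 0 \<and>
      of_int a * ((cmod z)\<^sup>2 + t\<^sup>2) + 2 * Re (B * z) + of_int c = 0}"

definition embedded_surface :: "nat \<Rightarrow> int \<Rightarrow> complex \<Rightarrow> int \<Rightarrow> bool" where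
  "embedded_surface d a B c \<longleftrightarrow>
     (\<forall>M \<in> SL2Od d. moeb_act M ` plane_of a B c = plane_of a B c
                    \<or> moeb_act M ` plane_of a B c \<inter> plane_of a B c = {})"

end

theory Submission
  imports Defs "Berlekamp_Zassenhaus.Factor_Bound"
begin

lemma mp_mult: "map_poly (of_rat :: rat \<Rightarrow> complex) (p * q) = map_poly of_rat p * map_poly of_rat q"
  by (rule poly_eqI) (simp add: coeff_mult of_rat_sum of_rat_mult coeff_map_poly)
lemma mp_add: "map_poly (of_rat :: rat \<Rightarrow> complex) (p + q) = map_poly of_rat p + map_poly of_rat q"
  by (rule poly_eqI) (simp add: of_rat_add coeff_map_poly)
lemma mp_int: "map_poly (of_rat :: rat \<Rightarrow> complex) (map_poly of_int p) = map_poly of_int p"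
  by (simp add: map_poly_map_poly o_def)

lemma of_rat_cplx: "(of_rat q :: complex) = complex_of_real (of_rat q)"
  by (cases q) (simp add: of_rat_rat)

lemma quad_int:
  fixes z :: complex and s N :: rat
  assumes ai: "algebraic_int z" and im: "Im z \<noteq> 0"
    and eq: "z^2 - of_rat s * z + of_rat N = 0"
  shows "s \<in> \<int> \<and> N \<in> \<int>"
proof -
  obtain P :: "int poly" where P: "poly (map_poly of_int P) z = 0" "lead_coeff P = 1"
    using ai by (auto simp: algebraic_int_altdef_ipoly)
  define mq :: "rat poly" where "mq = [:N, -s, 1:]"
  have mq0: "mq \<noteq> 0" and dmq: "degree mq = 2" and lmq: "lead_coeff mq = 1"
    by (auto simp: mq_def)
  have mz: "poly (map_poly of_rat mq) z = 0"
    using eq by (simp add: mq_def of_rat_minus power2_eq_square algebra_simps)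
  define Pq where "Pq = map_poly rat_of_int P"
  have Pqz: "poly (map_poly of_rat Pq) z = 0" using P mp_int by (simp add: Pq_def)
  define r where "r = Pq mod mq"
  have dm: "Pq = mq * (Pq div mq) + r"
    unfolding r_def using div_mult_mod_eq[of Pq mq] by (simp add: mult.commute)
  have rz: "poly (map_poly of_rat r) z = 0"
  proof -
    have "poly (map_poly of_rat Pq) z = poly (map_poly of_rat mq) z * poly (map_poly of_rat (Pq div mq)) z + poly (map_poly of_rat r) z"
      by (subst dm) (simp add: mp_mult mp_add)
    thus ?thesis using Pqz mz by simp
  qed
  have dr: "degree r \<le> 1"
    using degree_mod_less[OF mq0, of Pq] dmq unfolding r_def by force
  have rform: "poly (map_poly of_rat r) z = of_rat (Polynomial.coeff r 0) + of_rat (Polynomial.coeff r 1) * z"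
  proof -
    have "r = [:Polynomial.coeff r 0, Polynomial.coeff r 1:]"
      using dr by (intro poly_eqI) (auto simp: coeff_pCons split: nat.splits intro!: coeff_eq_0)
    hence "poly (map_poly (of_rat :: rat \<Rightarrow> complex) r) z = poly (map_poly of_rat [:Polynomial.coeff r 0, Polynomial.coeff r 1:]) z"
      by simp
    thus ?thesis by (simp add: map_poly_simps)
  qed
  have r1: "Polynomial.coeff r 1 = 0"
  proof -
    have "Im (of_rat (Polynomial.coeff r 0) + of_rat (Polynomial.coeff r 1) * z) = 0" using rz rform by simp
    hence "of_rat (Polynomial.coeff r 1) * Im z = (0::real)"
      by (simp add: of_rat_cplx) 
    thus ?thesis using im by simp
  qed
  have r0: "Polynomial.coeff r 0 = 0" using rz rform r1 by simp
  have "r = 0"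
  proof (rule poly_eqI)
    fix n show "Polynomial.coeff r n = Polynomial.coeff 0 n"
    proof (cases "n \<le> 1")
      case True thus ?thesis using r0 r1 by (cases n) auto
    next
      case False thus ?thesis using dr by (simp add: coeff_eq_0)
    qed
  qed
  hence fac: "map_poly rat_of_int P = mq * (Pq div mq)" using dm by (simp add: Pq_def)
  obtain rr rg where rgd: "rat_to_normalized_int_poly mq = (rr, rg)" by force
  note nf = rat_to_normalized_int_poly[OF rgd]
  obtain r' where Pfac: "P = rg * Polynomial.smult (content P) r'"
    using rat_to_int_factor_explicit[OF fac rgd] by blast
  have "lead_coeff rg * lead_coeff (Polynomial.smult (content P) r') = 1"
    using P(2) Pfac by (metis lead_coeff_mult)
  hence lu: "lead_coeff rg = 1 \<or> lead_coeff rg = -1"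
    using zmult_eq_1_iff by blast
  have "1 = lead_coeff mq" using lmq by simp
  also have "\<dots> = rr * of_int (lead_coeff rg)"
    using nf(1) by (metis lead_coeff_smult of_int_hom.hom_lead_coeff)
  finally have l1: "1 = rr * of_int (lead_coeff rg)" .
  have "lead_coeff rg = 1" using lu l1 nf(2)
    by auto
  hence rr1: "rr = 1" using l1 by simp
  have "Polynomial.coeff mq 0 = of_int (Polynomial.coeff rg 0)" "Polynomial.coeff mq 1 = of_int (Polynomial.coeff rg 1)"
    using nf(1) rr1 by (simp_all add: coeff_map_poly)
  hence "N = of_int (Polynomial.coeff rg 0)" "-s = of_int (Polynomial.coeff rg 1)" by (simp_all add: mq_def)
  thus ?thesis by (metis Ints_of_int minus_minus Ints_minus)
qed


abbreviation ww :: "nat \<Rightarrow> complex" where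
  "ww d \<equiv> complex_of_real (sqrt (real d)) * \<i>"

lemma ww_sq: "(ww d)^2 = - of_nat d"
proof -
  have "(ww d)^2 = (complex_of_real (sqrt (real d)))^2 * \<i>^2"
    by (simp only: power_mult_distrib)
  moreover have "complex_of_real (sqrt (real d))^2 = complex_of_real (real d)"
    by (metis of_real_power real_sqrt_pow2 of_nat_0_le_iff)
  ultimately show ?thesis by simp
qed

lemma sqfree_rat:
  fixes q :: rat and d :: nat
  assumes "d > 0" "squarefree d" "of_nat d * q^2 \<in> \<int>"
  shows "q \<in> \<int>"
proof -
  obtain a b where qab: "quotient_of q = (a, b)" by force
  have q: "q = of_int a / of_int b" and b0: "b > 0" and cop: "Rings.coprime a b"
    using quotient_of_div[OF qab] quotient_of_denom_pos[OF qab] quotient_of_coprime[OF qab] by auto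
  obtain k :: int where k: "of_nat d * q^2 = of_int k" using assms(3) Ints_cases by blast
  have "of_int (int d * a^2) = (of_int (k * b^2) :: rat)"
    using k b0 by (simp add: q power_divide field_simps)
  hence eq: "int d * a^2 = k * b^2" by (simp only: of_int_eq_iff)
  have "b^2 dvd int d * a^2" using eq by simp
  moreover have "Rings.coprime b a" using cop Rings.coprime_commute by blast
  hence "Rings.coprime (b^2) (a^2)" by simp
  ultimately have "b^2 dvd int d" using coprime_dvd_mult_left_iff[of "b^2" "a^2" "int d"] by simp
  moreover have "int ((nat b)^2) = b^2" using b0 by simp
  ultimately have "int ((nat b)^2) dvd int d" by simp
  hence "(nat b)^2 dvd d" by (simp only: int_dvd_int_iff)
  hence "nat b dvd 1" using assms(2) unfolding squarefree_def by blast
  hence "b = 1" using b0 by simp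
  thus ?thesis using q by simp
qed

lemma OdI:
  fixes s t :: int
  assumes "4 dvd s^2 + int d * t^2" "z = (of_int s + of_int t * ww d) / 2"
  shows "z \<in> Od d"
proof -
  obtain K where K: "s^2 + int d * t^2 = 4 * K" using assms(1) by blast
  have "algebraic_int z"
  proof (rule algebraic_int.intros[of "[:of_int K, - of_int s, 1:]"])
    show "lead_coeff [:of_int K, - of_int s, 1:] = (1::complex)" by simp
    show "\<forall>i. Polynomial.coeff [:of_int K, - of_int s, 1:] i \<in> (\<int>::complex set)"
      by (auto simp: coeff_pCons split: nat.splits)
    have K': "(of_int K :: complex) = (of_int s ^2 + of_nat d * of_int t^2) / 4"
      using arg_cong[OF K, of "of_int :: int \<Rightarrow> complex"] by simp
    have "poly [:of_int K, - of_int s, 1:] z = of_int K - of_int s * z + z^2"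
      by (simp add: algebra_simps power2_eq_square)
    also have "\<dots> = 0"
      unfolding K' assms(2) using ww_sq[of d]
      by (simp add: field_simps power2_eq_square)
    finally show "poly [:of_int K, - of_int s, 1:] z = 0" .
  qed
  moreover have "z = of_rat (of_int s / 2) + of_rat (of_int t / 2) * ww d"
    using assms(2) by (simp add: of_rat_divide field_simps)
  ultimately show ?thesis unfolding Od_def by blast
qed

lemma ww_mult: "ww d * ww d = - of_nat d"
  using ww_sq[of d] by (simp add: power2_eq_square)

lemma OdD:
  assumes d0: "d > 0" and sf: "squarefree d" and z: "z \<in> Od d"
  shows "\<exists>s t::int. 4 dvd s^2 + int d * t^2 \<and> z = (of_int s + of_int t * ww d) / 2"
proof -
  obtain p q :: rat where ai: "algebraic_int z" and zpq: "z = of_rat p + of_rat q * ww d"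
    using z unfolding Od_def by blast
  show ?thesis
  proof (cases "q = 0")
    case True
    hence "z = of_rat p" using zpq by simp
    hence "z \<in> \<rat>" by simp
    hence "z \<in> \<int>" using rational_algebraic_int_is_int ai by blast
    then obtain k where k: "z = of_int k" using Ints_cases by blast
    show ?thesis
      by (rule exI[of _ "2 * k"], rule exI[of _ 0]) (simp add: k power_mult_distrib)
  next
    case False
    have imz: "Im z = of_rat q * sqrt (real d)" using zpq by (simp add: of_rat_cplx)
    hence im0: "Im z \<noteq> 0" using False d0 by simp
    have eq: "z^2 - of_rat (2 * p) * z + of_rat (p^2 + of_nat d * q^2) = 0"
      unfolding zpq using ww_mult[of d]
      by (simp add: of_rat_add of_rat_mult of_rat_power power2_eq_square algebra_simps)
    from quad_int[OF ai im0 eq] have i1: "2 * p \<in> \<int>" and i2: "p^2 + of_nat d * q^2 \<in> \<int>" by auto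
    have "of_nat d * (2 * q)^2 = 4 * (p^2 + of_nat d * q^2) - (2 * p)^2"
      by (simp add: power2_eq_square algebra_simps)
    also have "\<dots> \<in> \<int>"
    proof -
      have "(2*p)^2 \<in> \<int>" using i1 by (rule Ints_power)
      moreover have "4 * (p^2 + of_nat d * q^2) \<in> \<int>" using i2 by (intro Ints_mult) auto
      ultimately show ?thesis by (rule Ints_diff[rotated])
    qed
    finally have "2 * q \<in> \<int>" using sqfree_rat[OF d0 sf] by blast
    then obtain t where t: "2 * q = of_int t" using Ints_cases by blast
    obtain s where s: "2 * p = of_int s" using i1 Ints_cases by blast
    obtain N where N: "p^2 + of_nat d * q^2 = of_int N" using i2 Ints_cases by blast
    have "of_int (s^2 + int d * t^2) = (of_int (4*N) :: rat)"
      using s t N by (simp flip: s t add: power2_eq_square algebra_simps)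
    hence "s^2 + int d * t^2 = 4 * N" by (simp only: of_int_eq_iff)
    moreover have "z = (of_int s + of_int t * ww d) / 2"
    proof -
      have "(of_int s :: complex) = of_rat (2 * p)" "(of_int t :: complex) = of_rat (2 * q)"
        using s t by (metis of_rat_of_int_eq)+
      thus ?thesis unfolding zpq by (simp add: of_rat_mult field_simps)
    qed
    ultimately show ?thesis by (intro exI[of _ s] exI[of _ t]) auto
  qed
qed

lemma par_lem:
  fixes s1 t1 s2 t2 :: int
  assumes "4 dvd s1^2 + int d * t1^2" "4 dvd s2^2 + int d * t2^2"
  shows "even (s1 * s2 + int d * t1 * t2) \<and> even (s1 * t2 + s2 * t1)"
proof -
  have e1: "even (s1^2 + int d * t1^2)" "even (s2^2 + int d * t2^2)"
    using assms by (meson dvd_trans even_numeral)+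
  show ?thesis
  proof (cases "even (int d)")
    case True
    thus ?thesis using e1 by auto
  next
    case False
    thus ?thesis using e1 by auto
  qed
qed

lemma half_lem: "(X::complex) * 4 = 2 * A \<Longrightarrow> X = A / 2"
  by (simp add: field_simps)

lemma Od_mult:
  assumes "d > 0" "squarefree d" "x \<in> Od d" "y \<in> Od d"
  shows "x * y \<in> Od d"
proof -
  obtain s1 t1 where 1: "4 dvd s1^2 + int d * t1^2" "x = (of_int s1 + of_int t1 * ww d) / 2"
    using OdD assms by blast
  obtain s2 t2 where 2: "4 dvd s2^2 + int d * t2^2" "y = (of_int s2 + of_int t2 * ww d) / 2"
    using OdD assms by blast
  obtain e where e: "s1 * s2 + int d * t1 * t2 = 2 * e" using par_lem[OF 1(1) 2(1)] by blast
  obtain f where f: "s1 * t2 + s2 * t1 = 2 * f" using par_lem[OF 1(1) 2(1)] by blast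
  obtain K1 where K1: "s1^2 + int d * t1^2 = 4*K1" using 1 by blast
  obtain K2 where K2: "s2^2 + int d * t2^2 = 4*K2" using 2 by blast
  define s where "s = e - int d * t1 * t2"
  have ss: "2 * s = s1 * s2 - int d * t1 * t2" using e unfolding s_def by (simp add: algebra_simps)
  have "4 * ((s)^2 + int d * f^2) = (2 * s)^2 + int d * (2 * f)^2" by (simp add: power2_eq_square algebra_simps)
  also have "\<dots> = (s1 * s2 - int d * t1 * t2)^2 + int d * (s1 * t2+s2 * t1)^2"
    using ss f by simp
  also have "\<dots> = (s1^2 + int d * t1^2) * (s2^2 + int d * t2^2)"
    by (simp add: power2_eq_square algebra_simps)
  also have "\<dots> = 4 * (4 * K1 * K2)" using K1 K2 by simp
  finally have "s^2 + int d * f^2 = 4 * (K1 * K2)" by simp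
  hence "4 dvd s^2 + int d * f^2" by simp
  moreover have "x * y = (of_int s + of_int f * ww d) / 2"
  proof -
    have "x * y = ((of_int s1 + of_int t1 * ww d) * (of_int s2 + of_int t2 * ww d)) / 4"
      unfolding 1(2) 2(2) by simp
    also have "\<dots> = (of_int (s1 * s2) + of_int (s1 * t2+s2 * t1) * ww d + of_int (t1 * t2) * (ww d * ww d)) / 4"
      by (simp add: algebra_simps)
    also have "\<dots> = (of_int (s1 * s2 - int d * t1 * t2) + of_int (s1 * t2+s2 * t1) * ww d) / 4"
      by (subst ww_mult) (simp add: algebra_simps)
    also have "s1 * s2 - int d * t1 * t2 = 2 * s" using e by (simp add: s_def algebra_simps)
    finally have "x * y * 4 = 2 * (of_int s + of_int f * ww d)" using f by (simp add: algebra_simps)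
    thus ?thesis by (rule half_lem)
  qed
  ultimately show ?thesis by (rule OdI)
qed

lemma Od_add:
  assumes "d > 0" "squarefree d" "x \<in> Od d" "y \<in> Od d"
  shows "x + y \<in> Od d"
proof -
  obtain s1 t1 where 1: "4 dvd s1^2 + int d * t1^2" "x = (of_int s1 + of_int t1 * ww d) / 2"
    using OdD assms by blast
  obtain s2 t2 where 2: "4 dvd s2^2 + int d * t2^2" "y = (of_int s2 + of_int t2 * ww d) / 2"
    using OdD assms by blast
  obtain e where e: "s1 * s2 + int d * t1 * t2 = 2 * e" using par_lem[OF 1(1) 2(1)] by blast
  obtain K1 where K1: "s1^2 + int d * t1^2 = 4*K1" using 1 by blast
  obtain K2 where K2: "s2^2 + int d * t2^2 = 4*K2" using 2 by blast
  have "(s1+s2)^2 + int d * (t1+t2)^2 = (s1^2 + int d * t1^2) + (s2^2 + int d * t2^2) + 2 * (s1 * s2 + int d * t1 * t2)"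
    by (simp add: power2_eq_square algebra_simps)
  also have "\<dots> = 4 * (K1 + K2 + e)" using K1 K2 e by simp
  finally have "4 dvd (s1+s2)^2 + int d * (t1+t2)^2" by simp
  moreover have "x + y = (of_int (s1+s2) + of_int (t1+t2) * ww d) / 2"
    using 1 2 by (simp add: field_simps)
  ultimately show ?thesis by (rule OdI)
qed

lemma Od_uminus:
  assumes "d > 0" "squarefree d" "x \<in> Od d"
  shows "- x \<in> Od d"
proof -
  obtain s1 t1 where 1: "4 dvd s1^2 + int d * t1^2" "x = (of_int s1 + of_int t1 * ww d) / 2"
    using OdD assms by blast
  have "4 dvd (-s1)^2 + int d * (-t1)^2" using 1 by simp
  moreover have "- x = (of_int (-s1) + of_int (-t1) * ww d) / 2" using 1 by (simp add: field_simps)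
  ultimately show ?thesis by (rule OdI)
qed

lemma Od_1: "1 \<in> Od d"
  by (rule OdI[of 2 d 0]) auto



lemma re_eq: "complex_of_real (Re z) = (z + cnj z) / 2"
  using complex_add_cnj[of z] by simp

lemmas cx_simps = of_real_add of_real_mult of_real_diff of_real_minus
  complex_norm_square re_eq complex_cnj_add complex_cnj_mult complex_cnj_diff
  complex_cnj_complex_of_real complex_cnj_minus complex_cnj_power complex_cnj_cnj

lemma det_id:
  fixes al be ga de z :: complex and t :: real
  shows "((cmod (ga*z+de))^2 + (cmod ga)^2 * t^2) * ((cmod (al*z+be))^2 + (cmod al)^2 * t^2)
       = (cmod ((al * z + be) * cnj (ga * z + de) + al * cnj ga * complex_of_real (t^2)))^2
         + t^2 * (cmod (al*de - be*ga))^2"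
  by (simp add: cmod_power2) (simp add: power2_eq_square algebra_simps)

definition evF :: "real \<Rightarrow> complex \<Rightarrow> real \<Rightarrow> complex \<Rightarrow> real \<Rightarrow> real" where
  "evF a B c z t = a * ((cmod z)^2 + t^2) + 2 * Re (B * z) + c"

definition Qf :: "real \<Rightarrow> complex \<Rightarrow> real \<Rightarrow> complex \<Rightarrow> complex \<Rightarrow> real" where
  "Qf a B c x y = a * (cmod x)^2 + 2 * Re (B * x * cnj y) + c * (cmod y)^2"

definition trB :: "real \<Rightarrow> complex \<Rightarrow> real \<Rightarrow> complex \<Rightarrow> complex \<Rightarrow> complex \<Rightarrow> complex \<Rightarrow> complex" where
  "trB a B c al be ga de = of_real a * al * cnj be + B * al * cnj de + cnj B * cnj be * ga + of_real c * ga * cnj de"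

lemma form_id:
  "a * ((cmod (al*z+be))^2 + (cmod al)^2 * t^2)
   + 2 * Re (B * ((al * z + be) * cnj (ga * z + de) + al * cnj ga * complex_of_real (t^2)))
   + c * ((cmod (ga*z+de))^2 + (cmod ga)^2 * t^2)
   = evF (Qf a B c al ga) (trB a B c al be ga de) (Qf a B c be de) z t"
  unfolding evF_def Qf_def trB_def by (simp add: cmod_power2) (simp add: power2_eq_square algebra_simps)

lemma disc_id:
  "(cmod (trB a B c al be ga de))^2 - Qf a B c al ga * Qf a B c be de
   = ((cmod B)^2 - a * c) * (cmod (al*de - be*ga))^2"
  unfolding Qf_def trB_def by (simp add: cmod_power2) (simp add: power2_eq_square algebra_simps)

lemma comp_A:
  "Qf (Qf a B c al ga) (trB a B c al be ga de) (Qf a B c be de) al' ga'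
   = Qf a B c (al*al' + be*ga') (ga*al' + de*ga')"
  unfolding Qf_def trB_def by (simp add: cmod_power2) (simp add: power2_eq_square algebra_simps)

lemma comp_B:
  "trB (Qf a B c al ga) (trB a B c al be ga de) (Qf a B c be de) al' be' ga' de'
   = trB a B c (al*al' + be*ga') (al*be' + be*de') (ga*al' + de*ga') (ga*be' + de*de')"
  unfolding Qf_def trB_def by (simp add: complex_eq_iff cmod_power2) (simp add: power2_eq_square algebra_simps)

lemma moeb_ev:
  fixes z al be ga de :: complex and t :: real and a c :: real and B :: complex
  assumes det: "al*de - be*ga = 1" and t: "t > 0"
  defines "N \<equiv> (cmod (ga*z+de))^2 + (cmod ga)^2 * t^2"
  shows "N > 0" "snd (moeb_act (al,be,ga,de) (z,t)) = t / N"
    "evF a B c (fst (moeb_act (al,be,ga,de) (z,t))) (snd (moeb_act (al,be,ga,de) (z,t)))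
       = evF (Qf a B c al ga) (trB a B c al be ga de) (Qf a B c be de) z t / N"
proof -
  show N0: "N > 0"
  proof (cases "ga = 0")
    case True
    hence "de \<noteq> 0" using det by auto
    thus ?thesis using True by (simp add: N_def)
  next
    case False
    have "(cmod ga)^2 * t^2 > 0" using False t by simp
    moreover have "(cmod (ga*z+de))^2 \<ge> 0" by simp
    ultimately show ?thesis unfolding N_def by linarith
  qed
  define W where "W = (al * z + be) * cnj (ga * z + de) + al * cnj ga * complex_of_real (t^2)"
  define N1 where "N1 = (cmod (al*z+be))^2 + (cmod al)^2 * t^2"
  have ma: "moeb_act (al,be,ga,de) (z,t) = (W / complex_of_real N, t / N)"
    unfolding moeb_act_def W_def N_def by (simp add: Let_def)
  thus "snd (moeb_act (al,be,ga,de) (z,t)) = t / N" by simp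
  have dd: "(cmod W)^2 + t^2 = N * N1"
    using det_id[where al=al and be=be and ga=ga and de=de and z=z and t=t] det unfolding W_def N_def N1_def by simp
  have c1: "cmod (W / complex_of_real N) = cmod W / N"
    using N0 by (simp add: norm_divide)
  have c2: "Re (B * (W / complex_of_real N)) = Re (B * W) / N"
    by (simp add: Re_divide_of_real)
  have "evF a B c (W / complex_of_real N) (t / N)
      = a * (((cmod W)^2 + t^2) / N^2) + 2 * (Re (B * W) / N) + c"
    unfolding evF_def c1 c2 by (simp add: power_divide add_divide_distrib)
  also have "\<dots> = (a * N1 + 2 * Re (B * W) + c * N) / N"
    unfolding dd using N0 by (simp add: field_simps power2_eq_square)
  also have "a * N1 + 2 * Re (B * W) + c * N
     = evF (Qf a B c al ga) (trB a B c al be ga de) (Qf a B c be de) z t"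
    unfolding N1_def W_def N_def by (rule form_id)
  finally show "evF a B c (fst (moeb_act (al,be,ga,de) (z,t))) (snd (moeb_act (al,be,ga,de) (z,t)))
       = evF (Qf a B c al ga) (trB a B c al be ga de) (Qf a B c be de) z t / N"
    using ma by simp
qed

lemma Tshift:
  "evF (Qf A Bb C 1 0) (trB A Bb C 1 1 0 1) (Qf A Bb C 1 1) z t = evF A Bb C (z+1) t"
  unfolding evF_def Qf_def trB_def by (simp add: cmod_power2) (simp add: power2_eq_square algebra_simps)

lemma shift_ev:
  fixes n m e t :: real
  assumes "n \<noteq> 0"
  shows "evF n Bb m (complex_of_real e - cnj Bb / complex_of_real n) t
     = n * (e^2 + t^2) - ((cmod Bb)^2 - n * m) / n"
  using assms unfolding evF_def
  by (simp add: cmod_power2 Re_divide Im_divide) (simp add: field_simps power2_eq_square)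

lemma chain_lem:
  fixes a c tt :: real and B x y u v zz :: complex
  assumes uv: "x * v - u * y = 1" and tt: "tt > 0"
  defines "Q \<equiv> moeb_act (x, u, y, v) (zz, tt)"
  defines "M \<equiv> (1 - x*y, x^2, -(y^2), 1 + x*y)"
  shows "snd Q > 0" "snd (moeb_act M Q) > 0"
    "evF a B c (fst Q) (snd Q) = 0 \<longleftrightarrow> evF (Qf a B c x y) (trB a B c x u y v) (Qf a B c u v) zz tt = 0"
    "evF a B c (fst (moeb_act M Q)) (snd (moeb_act M Q)) = 0 \<longleftrightarrow>
       evF (Qf a B c x y) (trB a B c x u y v) (Qf a B c u v) (zz + 1) tt = 0"
proof -
  note g = moeb_ev(1,2)[where z=zz, OF uv tt] moeb_ev(3)[where z=zz and a=a and B=B and c=c, OF uv tt]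
  obtain N where N: "N > 0" "snd Q = tt / N"
    "evF a B c (fst Q) (snd Q) = evF (Qf a B c x y) (trB a B c x u y v) (Qf a B c u v) zz tt / N"
    using g unfolding Q_def by blast
  show "snd Q > 0" using N tt by simp
  show "evF a B c (fst Q) (snd Q) = 0 \<longleftrightarrow> evF (Qf a B c x y) (trB a B c x u y v) (Qf a B c u v) zz tt = 0"
    using N by simp
  have detM: "(1 - x*y) * (1 + x*y) - x^2 * (-(y^2)) = 1" by (simp add: algebra_simps power2_eq_square)
  have Qp: "Q = (fst Q, snd Q)" by simp
  show "snd (moeb_act M Q) > 0"
    using moeb_ev(1,2)[where z="fst Q", OF detM \<open>snd Q > 0\<close>] Qp \<open>snd Q > 0\<close> unfolding M_def
    by (metis divide_pos_pos)
  note m = moeb_ev(1)[where z="fst Q", OF detM \<open>snd Q > 0\<close>] moeb_ev(3)[where z="fst Q" and a=a and B=B and c=c, OF detM \<open>snd Q > 0\<close>]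
  define A' where "A' = Qf a B c (1 - x*y) (-(y^2))"
  define B' where "B' = trB a B c (1 - x*y) (x^2) (-(y^2)) (1 + x*y)"
  define C' where "C' = Qf a B c (x^2) (1 + x*y)"
  obtain N' where N': "N' > 0"
    "evF a B c (fst (moeb_act M Q)) (snd (moeb_act M Q)) = evF A' B' C' (fst Q) (snd Q) / N'"
    using m Qp unfolding M_def A'_def B'_def C'_def by (metis (no_types, lifting))
  obtain N2 where N2: "N2 > 0"
    "evF A' B' C' (fst Q) (snd Q) = evF (Qf A' B' C' x y) (trB A' B' C' x u y v) (Qf A' B' C' u v) zz tt / N2"
    using moeb_ev(1)[where z=zz, OF uv tt] moeb_ev(3)[where z=zz and a=A' and B=B' and c=C', OF uv tt] unfolding Q_def by blast
  have e1: "(1 - x*y) * x + x^2 * y = x" "-(y^2) * x + (1 + x*y) * y = y"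
    by (simp_all add: algebra_simps power2_eq_square)
  have e2: "(1 - x*y) * u + x^2 * v = x + u" "-(y^2) * u + (1 + x*y) * v = y + v"
  proof -
    have "(1 - x*y) * u + x^2 * v = u + x * (x * v - u * y)" by (simp add: algebra_simps power2_eq_square)
    thus "(1 - x*y) * u + x^2 * v = x + u" using uv by simp
    have "-(y^2) * u + (1 + x*y) * v = v + y * (x * v - u * y)" by (simp add: algebra_simps power2_eq_square)
    thus "-(y^2) * u + (1 + x*y) * v = y + v" using uv by simp
  qed
  have f1: "Qf A' B' C' x y = Qf (Qf a B c x y) (trB a B c x u y v) (Qf a B c u v) 1 0"
    unfolding A'_def B'_def C'_def comp_A e1 by simp
  have f2: "Qf A' B' C' u v = Qf (Qf a B c x y) (trB a B c x u y v) (Qf a B c u v) 1 1"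
    unfolding A'_def B'_def C'_def comp_A e2 by (simp add: add.commute)
  have f3: "trB A' B' C' x u y v = trB (Qf a B c x y) (trB a B c x u y v) (Qf a B c u v) 1 1 0 1"
    unfolding A'_def B'_def C'_def comp_B e1 e2 by (simp add: add.commute)
  show "evF a B c (fst (moeb_act M Q)) (snd (moeb_act M Q)) = 0 \<longleftrightarrow>
       evF (Qf a B c x y) (trB a B c x u y v) (Qf a B c u v) (zz + 1) tt = 0"
    using N' N2 unfolding f1 f2 f3 Tshift by simp
qed

lemma geo_main:
  fixes a c :: real and B x y :: complex
  assumes D: "(cmod B)^2 - a*c > 0" and n0: "Qf a B c x y \<noteq> 0"
    and small: "(Qf a B c x y)^2 < 4*((cmod B)^2 - a*c)"
  defines "H \<equiv> {(z,t). t > 0 \<and> evF a B c z t = 0}" and "M \<equiv> (1 - x*y, x^2, -(y^2), 1 + x*y)"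
  shows "moeb_act M ` H \<noteq> H \<and> moeb_act M ` H \<inter> H \<noteq> {}"
proof -
  obtain u v where uv: "x * v - u * y = 1"
  proof (cases "x = 0")
    case False
    show ?thesis by (rule that[of "1/x" 0]) (use False in simp)
  next
    case True
    hence "y \<noteq> 0" using n0 by (auto simp: Qf_def)
    show ?thesis by (rule that[of 0 "-1/y"]) (use \<open>y \<noteq> 0\<close> in simp)
  qed
  define n where "n = Qf a B c x y"
  define Bb where "Bb = trB a B c x u y v"
  define m where "m = Qf a B c u v"
  define D where "D = (cmod B)^2 - a*c"
  have disc: "(cmod Bb)^2 - n * m = D"
    using disc_id[of a B c x u y v] uv unfolding n_def Bb_def m_def D_def by simp
  have nn: "n \<noteq> 0" "n^2 > 0" "n^2 < 4 * D" "D > 0" using n0 small D by (auto simp: n_def D_def)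
  have key: "evF n Bb m (complex_of_real e - cnj Bb / complex_of_real n) t = n * (e^2 + t^2) - D / n" for e t
    using shift_ev[OF nn(1), of Bb m e t] disc by simp
  have sh: "(complex_of_real e - cnj Bb / complex_of_real n) + 1 = complex_of_real (e + 1) - cnj Bb / complex_of_real n" for e
    by simp
  define t0 where "t0 = sqrt (D / n^2 - 1/4)"
  have q0: "D / n^2 - 1/4 > 0" using nn by (simp add: field_simps)
  hence t0p: "t0 > 0" and t0s: "t0^2 = D / n^2 - 1/4" unfolding t0_def by auto
  define z0 where "z0 = complex_of_real (-1/2) - cnj Bb / complex_of_real n"
  have a1: "n * (D / n^2) = D / n" using nn(1) by (simp add: power2_eq_square)
  have h0: "(-1/2::real)^2 + (D / n^2 - 1/4) = D / n^2" by (simp add: power2_eq_square)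
  have h0': "(-1/2 + 1::real)^2 + (D / n^2 - 1/4) = D / n^2" by (simp add: power2_eq_square)
  have ev0: "evF n Bb m z0 t0 = 0"
    unfolding z0_def key t0s h0 a1 by simp
  have ev0': "evF n Bb m (z0 + 1) t0 = 0"
    unfolding z0_def sh key t0s h0' a1 by simp
  define Q where "Q = moeb_act (x, u, y, v) (z0, t0)"
  have QH: "Q \<in> H" using chain_lem(1)[where zz=z0, OF uv t0p] chain_lem(3)[where zz=z0 and a=a and B=B and c=c, OF uv t0p] ev0 unfolding H_def Q_def n_def Bb_def m_def
    by (cases "moeb_act (x, u, y, v) (z0, t0)") auto
  have MQH: "moeb_act M Q \<in> H" using chain_lem(2)[where zz=z0, OF uv t0p] chain_lem(4)[where zz=z0 and a=a and B=B and c=c, OF uv t0p] ev0' unfolding H_def Q_def n_def Bb_def m_def M_def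
    by (cases "moeb_act (1 - x * y, x^2, - (y^2), 1 + x * y) (moeb_act (x, u, y, v) (z0, t0))") auto
  have inter: "moeb_act M ` H \<inter> H \<noteq> {}" using QH MQH by blast
  define t1 where "t1 = sqrt (D / n^2)"
  have t1p: "t1 > 0" and t1s: "t1^2 = D / n^2" unfolding t1_def using nn by auto
  define z1 where "z1 = complex_of_real 0 - cnj Bb / complex_of_real n"
  have h1: "(0::real)^2 + D / n^2 = D / n^2" by simp
  have h1': "(0 + 1::real)^2 + D / n^2 = 1 + D / n^2" by simp
  have ev1: "evF n Bb m z1 t1 = 0"
    unfolding z1_def key t1s h1 a1 by simp
  have ev1': "evF n Bb m (z1 + 1) t1 \<noteq> 0"
    unfolding z1_def sh key t1s h1' using nn(1) a1 by (simp add: distrib_left)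
  define Q1 where "Q1 = moeb_act (x, u, y, v) (z1, t1)"
  have Q1H: "Q1 \<in> H" using chain_lem(1)[where zz=z1, OF uv t1p] chain_lem(3)[where zz=z1 and a=a and B=B and c=c, OF uv t1p] ev1 unfolding H_def Q1_def n_def Bb_def m_def
    by (cases "moeb_act (x, u, y, v) (z1, t1)") auto
  have MQ1H: "moeb_act M Q1 \<notin> H" using chain_lem(4)[where zz=z1 and a=a and B=B and c=c, OF uv t1p] ev1' unfolding H_def Q1_def n_def Bb_def m_def M_def
    by (cases "moeb_act (1 - x * y, x^2, - (y^2), 1 + x * y) (moeb_act (x, u, y, v) (z1, t1))") auto
  have "moeb_act M ` H \<noteq> H" using Q1H MQ1H by blast
  with inter show ?thesis by blast
qed


lemma QA_Qf: "QA a B c x y = Qf (of_int a) B (of_int c) x y"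
  unfolding QA_def Qf_def by (simp add: cmod_power2) (simp add: power2_eq_square algebra_simps)

lemma plane_eq: "plane_of a B c = {(z,t). t > 0 \<and> evF (of_int a) B (of_int c) z t = 0}"
  unfolding plane_of_def evF_def by auto

theorem corollary3p6:
  fixes d :: nat and a c :: int and B :: complex
  assumes "d > 0" and "squarefree d"
    and "B \<in> Od d"
    and "(cmod B)\<^sup>2 - of_int (a * c) > 0"
    and "embedded_surface d a B c"
  shows "\<forall>x \<in> Od d. \<forall>y \<in> Od d. QA a B c x y \<noteq> 0 \<longrightarrow>
           4 * ((cmod B)\<^sup>2 - of_int (a * c)) \<le> (QA a B c x y)\<^sup>2"
proof (intro ballI impI)
  fix x y assume x: "x \<in> Od d" and y: "y \<in> Od d" and q0: "QA a B c x y \<noteq> 0"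
  show "4 * ((cmod B)\<^sup>2 - of_int (a * c)) \<le> (QA a B c x y)\<^sup>2"
  proof (rule ccontr)
    assume "\<not> ?thesis"
    hence small: "(Qf (of_int a) B (of_int c) x y)^2 < 4*((cmod B)^2 - of_int a * of_int c)"
      by (simp add: QA_Qf)
    have D: "(cmod B)^2 - of_int a * of_int c > 0" using assms(4) by simp
    have n0: "Qf (of_int a) B (of_int c) x y \<noteq> 0" using q0 by (simp add: QA_Qf)
    note G = geo_main[OF D n0 small]
    define M where "M = (1 - x*y, x^2, -(y^2), 1 + x*y)"
    have xy: "x * y \<in> Od d" using Od_mult[OF assms(1,2) x y] .
    have "1 - x*y \<in> Od d"
      using Od_add[OF assms(1,2) Od_1 Od_uminus[OF assms(1,2) xy]] by simp
    moreover have "1 + x*y \<in> Od d" using Od_add[OF assms(1,2) Od_1 xy] .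
    moreover have "x^2 \<in> Od d" using Od_mult[OF assms(1,2) x x] by (simp add: power2_eq_square)
    moreover have "-(y^2) \<in> Od d" using Od_uminus[OF assms(1,2) Od_mult[OF assms(1,2) y y]]
      by (simp add: power2_eq_square)
    moreover have "(1 - x*y) * (1 + x*y) - x^2 * (-(y^2)) = 1"
      by (simp add: algebra_simps power2_eq_square)
    ultimately have "M \<in> SL2Od d" unfolding SL2Od_def M_def by simp
    hence "moeb_act M ` plane_of a B c = plane_of a B c \<or> moeb_act M ` plane_of a B c \<inter> plane_of a B c = {}"
      using assms(5) unfolding embedded_surface_def by blast
    thus False using G unfolding plane_eq M_def by blast
  qed
qed

end
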